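(* For every integer $n\ge 8$, Sepy has a winning strategy in the Dom-start Disjoint Domination Game played on the cycle $C_n$.
   Context: For a vertex $v$ of a graph $G$, $N[v]$ denotes its closed neighborhood. The Disjoint Domination Game on an isolate-free graph $G$ is played by Dom and Sepy with colors $p$ and $b$; $V_p,V_b$ denote the current sets of vertices of each color. Players alternate; either player may use either color. A move chooses a vertex $v$ and a color $c$ such that (i) $v$ is uncolored and (ii) some $u\in N[v]$ satisfies $N[u]\cap V_c=\emptyset$ (before the move); then $v$ gets color $c$. A player must make a legal move on his turn (no passing). The game ends as soon as either (s* ) some vertex $v$ has $N[v]\subseteq V_p$ or $N[v]\subseteq V_b$ — Sepy wins; or (d* ) both $V_p$ and $V_b$ are dominating sets — Dom wins. In the Dom-start game Dom moves first. *)

theory Defs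
  imports Main
begin

text \<open>A graph is given by a vertex set V and a symmetric adjacency relation E.\<close>

datatype color = ColP | ColB
datatype player = Dom | Sepy

definition cnbhd :: "'a set \<Rightarrow> ('a \<Rightarrow> 'a \<Rightarrow> bool) \<Rightarrow> 'a \<Rightarrow> 'a set" where
  "cnbhd V E v = insert v {u \<in> V. E v u}"

text \<open>A game position: the set of vertices coloured p and the set coloured b.\<close>

definition colset :: "'a set \<times> 'a set \<Rightarrow> color \<Rightarrow> 'a set" where
  "colset st c = (case c of ColP \<Rightarrow> fst st | ColB \<Rightarrow> snd st)"

definition legal_move :: "'a set \<Rightarrow> ('a \<Rightarrow> 'a \<Rightarrow> bool) \<Rightarrow> 'a set \<times> 'a set \<Rightarrow> 'a \<Rightarrow> color \<Rightarrow> bool" where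
  "legal_move V E st v c \<longleftrightarrow> v \<in> V \<and> v \<notin> fst st \<and> v \<notin> snd st \<and>
     (\<exists>u \<in> cnbhd V E v. cnbhd V E u \<inter> colset st c = {})"

definition do_move :: "'a set \<times> 'a set \<Rightarrow> 'a \<Rightarrow> color \<Rightarrow> 'a set \<times> 'a set" where
  "do_move st v c = (case c of ColP \<Rightarrow> (insert v (fst st), snd st) | ColB \<Rightarrow> (fst st, insert v (snd st)))"

definition sepy_end :: "'a set \<Rightarrow> ('a \<Rightarrow> 'a \<Rightarrow> bool) \<Rightarrow> 'a set \<times> 'a set \<Rightarrow> bool" where
  "sepy_end V E st \<longleftrightarrow> (\<exists>v \<in> V. cnbhd V E v \<subseteq> fst st \<or> cnbhd V E v \<subseteq> snd st)"

definition dominating :: "'a set \<Rightarrow> ('a \<Rightarrow> 'a \<Rightarrow> bool) \<Rightarrow> 'a set \<Rightarrow> bool" where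
  "dominating V E D \<longleftrightarrow> D \<subseteq> V \<and> (\<forall>v \<in> V. cnbhd V E v \<inter> D \<noteq> {})"

definition dom_end :: "'a set \<Rightarrow> ('a \<Rightarrow> 'a \<Rightarrow> bool) \<Rightarrow> 'a set \<times> 'a set \<Rightarrow> bool" where
  "dom_end V E st \<longleftrightarrow> dominating V E (fst st) \<and> dominating V E (snd st)"

fun other :: "player \<Rightarrow> player" where
  "other Dom = Sepy" | "other Sepy = Dom"

text \<open>Positions (colouring, player to move) from which Sepy has a winning strategy
  (the game is finite, so these are the least fixed point of the usual attractor rules).
  A player who has no legal move in a non-terminal position loses (this situation
  never occurs in the game, since a legal move always exists there).\<close>
inductive sepy_wins :: "'a set \<Rightarrow> ('a \<Rightarrow> 'a \<Rightarrow> bool) \<Rightarrow> 'a set \<times> 'a set \<Rightarrow> player \<Rightarrow> bool"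
  for V E where
  ended: "sepy_end V E st \<Longrightarrow> sepy_wins V E st t"
| sepy_move: "\<lbrakk>\<not> sepy_end V E st; \<not> dom_end V E st; legal_move V E st v c;
      sepy_wins V E (do_move st v c) Dom\<rbrakk> \<Longrightarrow> sepy_wins V E st Sepy"
| dom_move: "\<lbrakk>\<not> sepy_end V E st; \<not> dom_end V E st;
      \<forall>v c. legal_move V E st v c \<longrightarrow> sepy_wins V E (do_move st v c) Sepy\<rbrakk>
      \<Longrightarrow> sepy_wins V E st Dom"

definition cycle_V :: "nat \<Rightarrow> nat set" where
  "cycle_V n = {0..<n}"

definition cycle_E :: "nat \<Rightarrow> nat \<Rightarrow> nat \<Rightarrow> bool" where
  "cycle_E n i j \<longleftrightarrow> i < n \<and> j < n \<and> i \<noteq> j \<and> ((i + 1) mod n = j \<or> (j + 1) mod n = i)"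

end

theory Submission imports Defs begin

lemma pred_mod:
  assumes "(x::nat) < n" shows "(x+n-1) mod n = (if x = 0 then n - 1 else x - 1)"
proof (cases "x = 0")
  case False
  then have h: "x + n - 1 = (x - 1) + n" by arith
  have "(x - 1 + n) mod n = x - 1" using assms by simp
  then show ?thesis using False h by simp
qed (use assms in simp)

lemma succ_mod: "(x::nat) < n \<Longrightarrow> (x+1) mod n = (if x = n - 1 then 0 else x+1)"
proof (cases "x = n - 1")
  case True
  assume "x < n"
  then have "x+1 = n" using True by arith
  then show ?thesis using True by simp
qed simp

lemma nb:
  assumes "x < n" "n \<ge> 3"
  shows "cnbhd (cycle_V n) (cycle_E n) x = {x, (x+1) mod n, (x+n-1) mod n}"
proof -
  have a: "{u \<in> cycle_V n. cycle_E n x u} = {(x+1) mod n, (x+n-1) mod n}"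
  proof (intro set_eqI)
    fix y
    show "y \<in> {u \<in> cycle_V n. cycle_E n x u} \<longleftrightarrow> y \<in> {(x+1) mod n, (x+n-1) mod n}"
    proof (cases "y < n")
      case True
      show ?thesis unfolding mem_Collect_eq cycle_V_def cycle_E_def pred_mod[OF assms(1)] 
        succ_mod[OF True] succ_mod[OF assms(1)] using assms True by auto
    next
      case False
      have "(x+1) mod n < n" "(x+n-1) mod n < n" using assms by auto
      then show ?thesis using False unfolding cycle_V_def cycle_E_def
        by auto
    qed
  qed
  show ?thesis unfolding cnbhd_def a by auto
qed


lemma three_dist:
  assumes "x < n" "(n::nat) \<ge> 3"
  shows "x \<noteq> (x+1) mod n" "x \<noteq> (x+n-1) mod n" "(x+1) mod n \<noteq> (x+n-1) mod n"
  using assms unfolding pred_mod[OF assms(1)] succ_mod[OF assms(1)] by auto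

lemma ex_color: "(\<exists>c. P c) = (P ColP \<or> P ColB)" by (metis color.exhaust)
lemma all_color: "(\<forall>c. P c) = (P ColP \<and> P ColB)" by (metis color.exhaust)

lemma col_do: "colset (do_move st v c) c' = (if c' = c then insert v (colset st c') else colset st c')"
  by (cases c; cases c') (auto simp: colset_def do_move_def)

lemma fst_snd: "fst st = colset st ColP" "snd st = colset st ColB"
  by (auto simp: colset_def)

lemma sepy_end_iff: "sepy_end V E st \<longleftrightarrow> (\<exists>x\<in>V. \<exists>c. cnbhd V E x \<subseteq> colset st c)"
  unfolding sepy_end_def fst_snd ex_color by blast

lemma dom_end_iff: "dom_end V E st \<longleftrightarrow> (\<forall>c. dominating V E (colset st c))"
  unfolding dom_end_def fst_snd all_color by blast

lemma legal_iff: "legal_move V E st v c \<longleftrightarrow> v \<in> V \<and> (\<forall>c'. v \<notin> colset st c') \<and>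
   (\<exists>u\<in>cnbhd V E v. cnbhd V E u \<inter> colset st c = {})"
  unfolding legal_move_def fst_snd all_color by blast

context
  fixes n v :: nat
  assumes n8: "n \<ge> 8" and vn: "v < n"
begin

definition P :: "nat \<Rightarrow> nat" where "P k = (v + n + k - 3) mod n"

lemma P_lt: "P k < n" using n8 by (simp add: P_def)
lemma P_in: "P k \<in> cycle_V n" using P_lt by (simp add: cycle_V_def)

lemma P3: "P 3 = v" using vn by (simp add: P_def)

lemma P_succ: "(P k + 1) mod n = P (k+1)"
proof -
  have "v + n + (k+1) - 3 = (v + n + k - 3) + 1" using n8 by arith
  then show ?thesis unfolding P_def by (simp add: mod_Suc_eq)
qed

lemma P_pred: assumes "k \<ge> 1" shows "(P k + n - 1) mod n = P (k-1)"
proof -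
  have h: "P k + n - 1 = P k + (n - 1)" using n8 by arith
  have "v + n + (k-1) - 3 + n = (v + n + k - 3) + (n - 1)" using n8 assms by arith
  then have "(v + n + k - 3 + (n-1)) mod n = P (k-1)" unfolding P_def by (metis mod_add_self2)
  moreover have "(P k + n - 1) mod n = (P k + (n-1)) mod n" using h by simp
  moreover have "(P k + (n-1)) mod n = (v+n+k-3 + (n-1)) mod n" unfolding P_def by (rule mod_add_left_eq)
  ultimately show ?thesis by simp
qed

lemma nbP: assumes "k \<ge> 1" shows "cnbhd (cycle_V n) (cycle_E n) (P k) = {P k, P (k+1), P (k-1)}"
  using nb[OF P_lt, of k] n8 P_succ P_pred[OF assms] by auto

lemma P_dist: assumes "i \<le> 7" "j \<le> 7" shows "P i = P j \<longleftrightarrow> i = j"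
proof
  assume e: "P i = P j"
  show "i = j"
  proof (rule ccontr)
    assume "i \<noteq> j"
    then consider "i < j" | "j < i" by arith
    then show False
    proof cases
      case 1
      have "n dvd (v + n + j - 3) - (v + n + i - 3)"
        using e unfolding P_def using 1 by (subst mod_eq_dvd_iff_nat[symmetric]) auto
      moreover have "(v + n + j - 3) - (v + n + i - 3) = j - i" using n8 by arith
      ultimately have "n \<le> j - i" using 1 by (simp add: dvd_imp_le)
      then show False using 1 assms n8 by arith
    next
      case 2
      have "n dvd (v + n + i - 3) - (v + n + j - 3)"
        using e unfolding P_def using 2 by (subst mod_eq_dvd_iff_nat[symmetric]) auto
      moreover have "(v + n + i - 3) - (v + n + j - 3) = i - j" using n8 by arith
      ultimately have "n \<le> i - j" using 2 by (simp add: dvd_imp_le)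
      then show False using 2 assms n8 by arith
    qed
  qed
qed simp


abbreviation "VV \<equiv> cycle_V n"
abbreviation "EE \<equiv> cycle_E n"

lemma nbx: "x < n \<Longrightarrow> cnbhd VV EE x = {x, (x+1) mod n, (x+n-1) mod n}"
  using nb[of x n] n8 by simp

lemma not_sepy_small:
  assumes "\<And>c. colset st c \<subseteq> {a, b}"
  shows "\<not> sepy_end VV EE st"
proof
  assume "sepy_end VV EE st"
  then obtain x c where x: "x \<in> VV" "cnbhd VV EE x \<subseteq> colset st c" unfolding sepy_end_iff by blast
  then have xn: "x < n" by (simp add: cycle_V_def)
  have "{x, (x+1) mod n, (x+n-1) mod n} \<subseteq> {a, b}" using x(2) assms[of c] nbx[OF xn] by auto
  moreover have "x \<noteq> (x+1) mod n" "x \<noteq> (x+n-1) mod n" "(x+1) mod n \<noteq> (x+n-1) mod n"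
    using three_dist[OF xn] n8 by auto
  ultimately show False by auto
qed

lemma empty_not_dom: "\<not> dominating VV EE {}"
proof -
  have "0 \<in> VV" using n8 by (simp add: cycle_V_def)
  moreover have "0 \<in> cnbhd VV EE 0" by (simp add: cnbhd_def)
  ultimately show ?thesis unfolding dominating_def by blast
qed

definition oc :: "color \<Rightarrow> color" where "oc c = (if c = ColP then ColB else ColP)"
lemma oc_ne: "oc c \<noteq> c" by (cases c) (auto simp: oc_def)

lemma nb0: "cnbhd VV EE (P 1) = {P 1, P 2, P 0}" using nbP[of 1] by (simp add: numeral_2_eq_2)
lemma nb0s: "cnbhd VV EE (P (Suc 0)) = {P 1, P 2, P 0}" using nb0 by simp
lemma nb3: "cnbhd VV EE (P 3) = {P 3, P 4, P 2}" using nbP[of 3] by simp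
lemma nb4: "cnbhd VV EE (P 4) = {P 4, P 5, P 3}" using nbP[of 4] by simp
lemma nb5: "cnbhd VV EE (P 5) = {P 5, P 6, P 4}" using nbP[of 5] by simp
lemma nb6: "cnbhd VV EE (P 6) = {P 6, P 7, P 5}" using nbP[of 6] by simp
lemma nb2: "cnbhd VV EE (P 2) = {P 2, P 3, P 1}" using nbP[of 2] by simp

lemma Pd: "P 0 \<noteq> P 3" "P 1 \<noteq> P 3" "P 2 \<noteq> P 3" "P 4 \<noteq> P 3" "P 5 \<noteq> P 3" "P 6 \<noteq> P 3" "P 7 \<noteq> P 3"
  "P 0 \<noteq> P 4" "P 1 \<noteq> P 4" "P 2 \<noteq> P 4" "P 5 \<noteq> P 4" "P 6 \<noteq> P 4" "P 7 \<noteq> P 4"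
  "P 5 \<noteq> P 0" "P 6 \<noteq> P 0" "P 7 \<noteq> P 0" "P 5 \<noteq> P 1" "P 6 \<noteq> P 1" "P 7 \<noteq> P 1"
  "P 5 \<noteq> P 2" "P 6 \<noteq> P 2" "P 7 \<noteq> P 2"
  by (simp_all add: P_dist)

lemma stage3:
  assumes wn: "w < n" and w34: "w \<noteq> P 3" "w \<noteq> P 4"
    and hc: "colset st c \<subseteq> {P 3, P 4, w}" "P 3 \<in> colset st c" "P 4 \<in> colset st c"
    and ho: "\<And>c'. c' \<noteq> c \<Longrightarrow> colset st c' \<subseteq> {w}"
    and hz: "colset st c0 \<subseteq> {P 3, P 4}"
  shows "sepy_wins VV EE st Sepy"
proof (cases "sepy_end VV EE st")
  case True
  then show ?thesis by (rule sepy_wins.ended)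
next
  case ns: False
  have "\<not> dominating VV EE (colset st c0)"
  proof
    assume "dominating VV EE (colset st c0)"
    then have "cnbhd VV EE (P 6) \<inter> colset st c0 \<noteq> {}" using P_in unfolding dominating_def by blast
    then show False using hz unfolding nb6 using Pd by auto
  qed
  then have nd: "\<not> dom_end VV EE st" unfolding dom_end_iff by blast
  have hall: "\<And>c'. colset st c' \<subseteq> {P 3, P 4, w}" using hc ho by (metis insert_subset subset_insertI2 subset_trans order_refl)
  show ?thesis
  proof (cases "w = P 5 \<or> w = P 6 \<or> w = P 7")
    case False
    have lg: "legal_move VV EE st (P 5) c"
      unfolding legal_iff
    proof (intro conjI allI)
      show "P 5 \<in> VV" by (rule P_in)
      fix c' show "P 5 \<notin> colset st c'" using hall[of c'] False Pd by auto
    next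
      show "\<exists>u\<in>cnbhd VV EE (P 5). cnbhd VV EE u \<inter> colset st c = {}"
        using hc(1) False Pd unfolding nb5 by (intro bexI[of _ "P 6"]) (auto simp: nb6)
    qed
    have "sepy_end VV EE (do_move st (P 5) c)"
      unfolding sepy_end_iff using P_in[of 4] hc unfolding col_do
      by (intro bexI[of _ "P 4"] exI[of _ c]) (auto simp: nb4)
    then have "sepy_wins VV EE (do_move st (P 5) c) Dom" by (rule sepy_wins.ended)
    then show ?thesis using ns nd lg by (rule sepy_wins.sepy_move[rotated 3])
  next
    case True
    have lg: "legal_move VV EE st (P 2) c"
      unfolding legal_iff
    proof (intro conjI allI)
      show "P 2 \<in> VV" by (rule P_in)
      fix c' show "P 2 \<notin> colset st c'" using hall[of c'] True Pd by auto
    next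
      show "\<exists>u\<in>cnbhd VV EE (P 2). cnbhd VV EE u \<inter> colset st c = {}"
        using hc(1) True Pd unfolding nb2 by (intro bexI[of _ "P 1"]) (auto simp: nb0 nb0s)
    qed
    have "sepy_end VV EE (do_move st (P 2) c)"
      unfolding sepy_end_iff using P_in[of 3] hc unfolding col_do
      by (intro bexI[of _ "P 3"] exI[of _ c]) (auto simp: nb3)
    then have "sepy_wins VV EE (do_move st (P 2) c) Dom" by (rule sepy_wins.ended)
    then show ?thesis using ns nd lg by (rule sepy_wins.sepy_move[rotated 3])
  qed
qed


lemma stage2:
  assumes hc: "colset st c = {P 3, P 4}" and ho: "\<And>c'. c' \<noteq> c \<Longrightarrow> colset st c' = {}"
  shows "sepy_wins VV EE st Dom"
proof (rule sepy_wins.dom_move)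
  have hall: "\<And>c'. colset st c' \<subseteq> {P 3, P 4}" using hc ho by (metis empty_subsetI order_refl)
  show "\<not> sepy_end VV EE st" by (rule not_sepy_small[OF hall])
  show "\<not> dom_end VV EE st" unfolding dom_end_iff using ho[OF oc_ne[of c]] empty_not_dom by metis
  show "\<forall>w c'. legal_move VV EE st w c' \<longrightarrow> sepy_wins VV EE (do_move st w c') Sepy"
  proof (intro allI impI)
    fix w c' assume lg: "legal_move VV EE st w c'"
    then have wn: "w < n" and w34: "w \<noteq> P 3" "w \<noteq> P 4"
      using hc unfolding legal_iff cycle_V_def by auto
    show "sepy_wins VV EE (do_move st w c') Sepy"
    proof (cases "c' = c")
      case True
      show ?thesis
        by (rule stage3[OF wn w34, of _ c "oc c"]) (use True hc ho oc_ne in \<open>auto simp: col_do\<close>)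
    next
      case False
      show ?thesis
        by (rule stage3[OF wn w34, of _ c c]) (use False hc ho in \<open>auto simp: col_do\<close>)
    qed
  qed
qed

lemma stage1: "sepy_wins VV EE (do_move ({}, {}) v c) Sepy"
proof -
  let ?st = "do_move ({}, {}) v c"
  have e0: "colset ({}, {}) c' = {}" for c' by (cases c') (auto simp: colset_def)
  have hc: "colset ?st c' = (if c' = c then {P 3} else {})" for c' using P3 by (simp add: col_do e0)
  have ns: "\<not> sepy_end VV EE ?st" by (rule not_sepy_small[of _ "P 3" "P 3"]) (simp add: hc)
  have nd: "\<not> dom_end VV EE ?st" unfolding dom_end_iff using hc[of "oc c"] oc_ne[of c] empty_not_dom by metis
  have lg: "legal_move VV EE ?st (P 4) c"
    unfolding legal_iff
  proof (intro conjI allI)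
    show "P 4 \<in> VV" by (rule P_in)
    fix c' show "P 4 \<notin> colset ?st c'" using Pd by (simp add: hc)
  next
    show "\<exists>u\<in>cnbhd VV EE (P 4). cnbhd VV EE u \<inter> colset ?st c = {}"
      using Pd unfolding nb4 by (intro bexI[of _ "P 5"]) (auto simp: nb5 hc)
  qed
  have "sepy_wins VV EE (do_move ?st (P 4) c) Dom"
    by (rule stage2[of _ c]) (auto simp: col_do e0 P3)
  then show ?thesis using ns nd lg by (rule sepy_wins.sepy_move[rotated 3])
qed

end


theorem proposition6:
  fixes n :: nat
  assumes "n \<ge> 8"
  shows "sepy_wins (cycle_V n) (cycle_E n) ({}, {}) Dom"
proof (rule sepy_wins.dom_move)
  have e0: "colset ({}, {}) c' = {}" for c' by (cases c') (auto simp: colset_def)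
  have v0: "0 < n" using assms by simp
  show "\<not> sepy_end (cycle_V n) (cycle_E n) ({}, {})"
    by (rule not_sepy_small[OF assms v0]) (auto simp: e0)
  show "\<not> dom_end (cycle_V n) (cycle_E n) ({}, {})"
    using empty_not_dom[OF assms v0] unfolding dom_end_iff e0 by blast
  show "\<forall>v c. legal_move (cycle_V n) (cycle_E n) ({}, {}) v c \<longrightarrow>
      sepy_wins (cycle_V n) (cycle_E n) (do_move ({}, {}) v c) Sepy"
  proof (intro allI impI)
    fix v c assume "legal_move (cycle_V n) (cycle_E n) ({}, {}) v c"
    then have "v < n" by (simp add: legal_move_def cycle_V_def)
    then show "sepy_wins (cycle_V n) (cycle_E n) (do_move ({}, {}) v c) Sepy"
      by (rule stage1[OF assms])
  qed
qed

end
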